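(* Let $0 \le \alpha < 1$, let $f = h + \overline{g} \in \mathcal{F}(\alpha)$ and let $\lambda \in \mathbb{C}$ with $|\lambda|=1$. Then $F_\lambda := h + \lambda g$ satisfies, for every $z \in \mathbb{D}$ with $|z| = r$, $$|F_\lambda(z)| \ \ge\ \int_0^r \frac{1-\rho}{(1+\rho)^{2(1-\alpha)}}\,d\rho \;=\; L(r,\alpha),$$ where $L(r,\alpha)$ equals $\frac{2r}{1+r} - \log(1+r)$ if $\alpha=0$, $2\log(1+r) - r$ if $\alpha = 1/2$, and $\frac{(1+r)^{2\alpha}(1+r+2\alpha-2r\alpha) - (1+r)(1+2\alpha)}{2\alpha(1+r)(2\alpha-1)}$ if $\alpha \in (0,1)\setminus\{1/2\}$.
   Context: $\mathbb{D} = \{z \in \mathbb{C} : |z| < 1\}$. For $\alpha \ge -1/2$, $\mathcal{F}(\alpha)$ denotes the set of complex-valued harmonic functions $f = h + \overline{g}$ on $\mathbb{D}$, with $h, g$ analytic in $\mathbb{D}$ normalized by $h(0) = g(0) = 0$, $h'(0) = 1$, such that $\operatorname{Re}\left(1 + \frac{z h''(z)}{h'(z)}\right) > \alpha$ for all $z \in \mathbb{D}$ and, for some real constant $\theta$, $g'(z) = e^{i\theta} z h'(z)$ for all $z \in \mathbb{D}$. *)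

theory Defs
  imports "HOL-Analysis.Analysis"
begin

text \<open>The class F(alpha) of harmonic maps f = h + conj g on the unit disc, given by the pair (h, g).
  The condition Re(1 + z h''/h') > alpha presupposes h' nonvanishing, which we state explicitly
  (Isabelle's division by zero would otherwise make the quotient 0).\<close>
definition class_F :: "real \<Rightarrow> (complex \<Rightarrow> complex) \<Rightarrow> (complex \<Rightarrow> complex) \<Rightarrow> bool" where
  "class_F \<alpha> h g \<longleftrightarrow>
     h holomorphic_on ball 0 1 \<and> g holomorphic_on ball 0 1 \<and>
     h 0 = 0 \<and> g 0 = 0 \<and> deriv h 0 = 1 \<and>
     (\<forall>z\<in>ball 0 1. deriv h z \<noteq> 0 \<and>
        Re (1 + z * deriv (deriv h) z / deriv h z) > \<alpha>) \<and>
     (\<exists>\<theta>::real. \<forall>z\<in>ball 0 1. deriv g z = cis \<theta> * z * deriv h z)"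

definition L_bound :: "real \<Rightarrow> real \<Rightarrow> real" where
  "L_bound r \<alpha> =
     (if \<alpha> = 0 then 2 * r / (1 + r) - ln (1 + r)
      else if \<alpha> = 1/2 then 2 * ln (1 + r) - r
      else ((1 + r) powr (2 * \<alpha>) * (1 + r + 2 * \<alpha> - 2 * r * \<alpha>) - (1 + r) * (1 + 2 * \<alpha>))
           / (2 * \<alpha> * (1 + r) * (2 * \<alpha> - 1)))"

end

theory Submission
  imports Defs "HOL-Complex_Analysis.Complex_Analysis"
begin


lemma norm_has_real_derivative:
  fixes f :: "real \<Rightarrow> complex"
  assumes f: "(f has_vector_derivative f') (at t within S)" and nz: "f t \<noteq> 0"
  shows "((\<lambda>t. norm (f t)) has_real_derivative (Re (cnj (f t) * f') / norm (f t))) (at t within S)"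
proof -
  have n: "(norm has_derivative (\<lambda>y. y \<bullet> sgn (f t))) (at (f t))"
    using has_derivative_norm[OF nz] .
  have f2: "(f has_derivative (\<lambda>x. x *\<^sub>R f')) (at t within S)"
    using f by (simp add: has_vector_derivative_def)
  have "((\<lambda>t. norm (f t)) has_derivative (\<lambda>x. (x *\<^sub>R f') \<bullet> sgn (f t))) (at t within S)"
    using has_derivative_compose[OF f2 n] by simp
  moreover have "(\<lambda>x. (x *\<^sub>R f') \<bullet> sgn (f t)) = (*) (Re (cnj (f t) * f') / norm (f t))"
    by (auto simp: inner_complex_def sgn_div_norm field_simps add_divide_distrib fun_eq_iff)
  ultimately show ?thesis unfolding has_field_derivative_def by simp
qed




lemma L_integral:
  fixes r \<alpha> :: real
  assumes r: "0 \<le> r" and a: "0 \<le> \<alpha>" "\<alpha> < 1"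
  shows "integral {0..r} (\<lambda>\<rho>. (1 - \<rho>) / (1 + \<rho>) powr (2 * (1 - \<alpha>))) = L_bound r \<alpha>"
proof -
  define k where "k = (\<lambda>\<rho>::real. (1 - \<rho>) / (1 + \<rho>) powr (2 * (1 - \<alpha>)))"
  have ftc: "integral {0..r} k = G r - G 0"
    if der: "\<And>x. x \<in> {0..r} \<Longrightarrow> (G has_real_derivative k x) (at x)" for G
  proof -
    have "(k has_integral (G r - G 0)) {0..r}"
      apply (rule fundamental_theorem_of_calculus[OF r])
      using der by (auto simp: has_real_derivative_iff_has_vector_derivative[symmetric]
          intro: has_field_derivative_at_within)
    then show ?thesis by (rule integral_unique)
  qed
  show ?thesis
  proof (cases "\<alpha> = 0")
    case True
    let ?G = "\<lambda>x::real. - 2 / (1 + x) - ln (1 + x)"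
    have "integral {0..r} k = ?G r - ?G 0"
    proof (rule ftc)
      fix x assume x: "x \<in> {0..r}"
      then have x1: "1 + x > 0" by auto
      have "(?G has_real_derivative (2 / (1+x)^2 - 1/(1+x))) (at x)"
        using x1 by (auto intro!: derivative_eq_intros simp: power2_eq_square field_simps)
      moreover have "2 / (1+x)^2 - 1/(1+x) = k x"
      proof -
        have "(1+x) powr (2*(1-\<alpha>)) = (1+x)^2" using True x1 by (simp add: powr_numeral)
        then show ?thesis using x1 by (simp add: k_def divide_simps) (simp add: algebra_simps power2_eq_square)
      qed
      ultimately show "(?G has_real_derivative k x) (at x)" by simp
    qed
    also have "\<dots> = L_bound r \<alpha>"
      using True r by (simp add: L_bound_def field_simps)
    finally show ?thesis by (simp add: k_def)
  next
    case a0: False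
    show ?thesis
    proof (cases "\<alpha> = 1/2")
      case True
      let ?G = "\<lambda>x::real. 2 * ln (1 + x) - x"
      have "integral {0..r} k = ?G r - ?G 0"
      proof (rule ftc)
        fix x assume x: "x \<in> {0..r}"
        then have x1: "1 + x > 0" by auto
        have "(?G has_real_derivative (2 / (1+x) - 1)) (at x)"
          using x1 by (auto intro!: derivative_eq_intros simp: field_simps)
        moreover have "2 / (1+x) - 1 = k x"
          using x1 True by (simp add: k_def field_simps)
        ultimately show "(?G has_real_derivative k x) (at x)" by simp
      qed
      also have "\<dots> = L_bound r \<alpha>"
        using True a0 r by (simp add: L_bound_def field_simps)
      finally show ?thesis by (simp add: k_def)
    next
      case a2: False
      have d1: "2*\<alpha> - 1 \<noteq> 0" using a2 by simp
      have d2: "\<alpha> \<noteq> 0" using a0 .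
      let ?G = "\<lambda>x::real. 2 * (1 + x) powr (2*\<alpha> - 1) / (2*\<alpha> - 1) - (1 + x) powr (2*\<alpha>) / (2*\<alpha>)"
      have "integral {0..r} k = ?G r - ?G 0"
      proof (rule ftc)
        fix x assume x: "x \<in> {0..r}"
        then have x1: "1 + x > 0" by auto
        have "(?G has_real_derivative
             (2 * ((2*\<alpha> - 1) * (1+x) powr (2*\<alpha> - 1 - 1)) / (2*\<alpha> - 1)
               - (2*\<alpha>) * (1+x) powr (2*\<alpha> - 1) / (2*\<alpha>))) (at x)"
        proof -
          have dd: "((\<lambda>x. 1 + x) has_real_derivative 1) (at x)" by (auto intro!: derivative_eq_intros)
          have p1: "((\<lambda>x. (1 + x) powr (2*\<alpha> - 1)) has_real_derivative (2*\<alpha> - 1) * (1+x) powr (2*\<alpha> - 1 - 1)) (at x)"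
            using DERIV_chain2[OF has_real_derivative_powr[OF x1, of "2*\<alpha> - 1"] dd] by simp
          have p2: "((\<lambda>x. (1 + x) powr (2*\<alpha>)) has_real_derivative (2*\<alpha>) * (1+x) powr (2*\<alpha> - 1)) (at x)"
            using DERIV_chain2[OF has_real_derivative_powr[OF x1, of "2*\<alpha>"] dd] by simp
          show ?thesis
            by (intro DERIV_diff DERIV_cdivide DERIV_cmult p1 p2)
        qed
        moreover have "2 * ((2*\<alpha> - 1) * (1+x) powr (2*\<alpha> - 1 - 1)) / (2*\<alpha> - 1)
               - (2*\<alpha>) * (1+x) powr (2*\<alpha> - 1) / (2*\<alpha>) = k x"
        proof -
          have e1: "(1+x) powr (2*\<alpha> - 1 - 1) = (1+x) powr (2*\<alpha> - 1) / (1+x)"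
            using x1 by (simp add: powr_diff power2_eq_square)
          have e2: "(1+x) powr (2*(1-\<alpha>)) = (1+x) / (1+x) powr (2*\<alpha> - 1)"
          proof -
            have "2*(1-\<alpha>) = 1 - (2*\<alpha> - 1)" by simp
            then show ?thesis using x1 by (simp only: powr_diff) simp
          qed
          have p: "(1+x) powr (2*\<alpha> - 1) > 0" using x1 by simp
          have gen: "2 * ((2*\<alpha> - 1) * (P / (1+x))) / (2*\<alpha> - 1) - (2*\<alpha>) * P / (2*\<alpha>)
              = (1 - x) / ((1+x) / P)" if "P > 0" for P
          proof -
            have "2 * ((2*\<alpha> - 1) * (P / (1+x))) / (2*\<alpha> - 1) = 2 * (P/(1+x))" using d1 by simp
            moreover have "(2*\<alpha>) * P / (2*\<alpha>) = P" using d2 by simp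
            ultimately show ?thesis using x1 that by (simp add: field_simps)
          qed
          show ?thesis unfolding k_def e1 e2 using gen[OF p] by simp
        qed
        ultimately show "(?G has_real_derivative k x) (at x)" by simp
      qed
      also have "\<dots> = L_bound r \<alpha>"
      proof -
        have r1: "1 + r > 0" using r by simp
        have e: "(1+r) powr (2*\<alpha> - 1) = (1+r) powr (2*\<alpha>) / (1+r)"
          using r1 by (simp add: powr_diff)
        have gen: "2 * (Q / (1+r)) / (2*\<alpha> - 1) - Q / (2*\<alpha>) - (2 / (2*\<alpha> - 1) - 1 / (2*\<alpha>))
           = (Q * (1 + r + 2 * \<alpha> - 2 * r * \<alpha>) - (1 + r) * (1 + 2 * \<alpha>)) / (2 * \<alpha> * (1 + r) * (2 * \<alpha> - 1))" for Q
        proof -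
          have n: "2 * \<alpha> * (1 + r) * (2 * \<alpha> - 1) \<noteq> 0" using d1 d2 r1 by simp
          have g: "2*(Q/u)/a - Q/b - (2/a - 1/b) = (Q*(u + b - (u-1)*b) - u*(1+b))/(b*u*a)"
            if "a \<noteq> 0" "b \<noteq> 0" "u \<noteq> 0" "b = a + 1" for a b u :: real
          proof -
            have "(2*(Q/u)/a - Q/b - (2/a - 1/b)) * (b*u*a) = 2*Q*b - Q*u*a - 2*b*u + u*a"
              using that(1-3) by (simp add: field_simps)
            also have "\<dots> = Q*(u + b - (u-1)*b) - u*(1+b)" using that(4) by (simp add: algebra_simps)
            finally show ?thesis using that(1-3) by (simp add: eq_divide_eq)
          qed
          have "1 + r + 2 * \<alpha> - 2 * r * \<alpha> = (1+r) + 2*\<alpha> - ((1+r) - 1)*(2*\<alpha>)" by (simp add: algebra_simps)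
          then show ?thesis using g[of "2*\<alpha>-1" "2*\<alpha>" "1+r"] d1 d2 r1 by (simp add: mult.commute mult.left_commute)
        qed
        show ?thesis using a0 a2 gen[of "(1+r) powr (2*\<alpha>)"] unfolding L_bound_def e
          by simp
      qed
      finally show ?thesis by (simp add: k_def)
    qed
  qed
qed




lemma Re_cayley_bound:
  fixes w :: complex and s :: real
  assumes "norm w \<le> s" "s < 1"
  shows "Re ((1 + w) / (1 - w)) \<ge> (1 - s) / (1 + s)"
proof -
  obtain x y where w: "w = Complex x y" by (cases w)
  have n: "x^2 + y^2 \<le> s^2" using assms(1) unfolding w
    by (metis cmod_power2 complex.sel norm_ge_zero power_mono)
  have s0: "0 \<le> s" using assms(1) norm_ge_zero order_trans by blast
  have xs: "x^2 \<le> s^2" using n by (meson le_add_same_cancel1 order_trans zero_le_power2)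
  have ax: "\<bar>x\<bar> \<le> s" using xs s0 by (simp add: power2_le_iff_abs_le)
  have x1: "x < 1" using ax assms(2) by linarith
  have d: "(1-x)^2 + y^2 > 0" using x1 by (simp add: add_pos_nonneg)
  have re: "Re ((1 + w) / (1 - w)) = (1 - x^2 - y^2) / ((1-x)^2 + y^2)"
    unfolding w by (simp add: Re_divide power2_eq_square algebra_simps)
  have key: "(1 - s) * ((1-x)^2 + y^2) \<le> (1 - x^2 - y^2) * (1 + s)"
  proof -
    define t where "t = x^2 + y^2"
    have "(1 - x^2 - y^2) * (1 + s) - (1 - s) * ((1-x)^2 + y^2) = 2 * (s - t + x * (1 - s))"
      unfolding t_def by (simp add: power2_eq_square algebra_simps)
    moreover have "s - t + x * (1 - s) \<ge> 0"
    proof -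
      have "sqrt t \<le> s" using n s0 unfolding t_def using real_sqrt_le_mono[of "x^2+y^2" "s^2"] by simp
      have "t \<ge> 0" unfolding t_def by simp
      have "\<bar>x\<bar> \<le> sqrt t" unfolding t_def
        using real_sqrt_le_mono[of "x^2" "x^2+y^2"] by simp
      then have "x \<ge> - sqrt t" by linarith
      have "s - t + x * (1 - s) \<ge> s - t - sqrt t * (1 - s)"
        using mult_right_mono[OF \<open>x \<ge> - sqrt t\<close>, of "1 - s"] assms(2) by simp
      also have "s - t - sqrt t * (1 - s) = (s - sqrt t) * (1 + sqrt t)"
        using \<open>t \<ge> 0\<close> by (simp add: algebra_simps)
      also have "\<dots> \<ge> 0" using \<open>sqrt t \<le> s\<close> \<open>t \<ge> 0\<close> by simp
      finally show ?thesis .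
    qed
    ultimately have "0 \<le> (1 - x^2 - y^2) * (1 + s) - (1 - s) * ((1-x)^2 + y^2)" by simp
    then show ?thesis by simp
  qed
  have sp: "1 + s > 0" using s0 by simp
  show ?thesis unfolding re using d sp key
    by (simp add: divide_simps)
qed

lemma class_F_D:
  assumes "class_F \<alpha> h g"
  shows "h holomorphic_on ball 0 1" "g holomorphic_on ball 0 1" "h 0 = 0" "g 0 = 0" "deriv h 0 = 1"
    "\<And>z. z \<in> ball 0 1 \<Longrightarrow> deriv h z \<noteq> 0"
    "\<And>z. z \<in> ball 0 1 \<Longrightarrow> Re (1 + z * deriv (deriv h) z / deriv h z) > \<alpha>"
    "\<exists>\<theta>::real. \<forall>z\<in>ball 0 1. deriv g z = cis \<theta> * z * deriv h z"
  using assms unfolding class_F_def by auto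

lemma Re_P_bound:
  assumes F: "class_F \<alpha> h g" and a1: "\<alpha> < 1" and z: "z \<in> ball 0 1"
  shows "Re (z * deriv (deriv h) z / deriv h z) \<ge> - 2 * (1 - \<alpha>) * norm z / (1 + norm z)"
proof -
  note cF = class_F_D[OF F]
  define h1 where "h1 = deriv h"
  define h2 where "h2 = deriv h1"
  have hol1: "h1 holomorphic_on ball 0 1" unfolding h1_def by (intro holomorphic_deriv cF(1)) auto
  have hol2: "h2 holomorphic_on ball 0 1" unfolding h2_def by (intro holomorphic_deriv hol1) auto
  define P where "P = (\<lambda>z. (1 + z * h2 z / h1 z - of_real \<alpha>) / of_real (1 - \<alpha>))"
  have holP: "P holomorphic_on ball 0 1" unfolding P_def
    using cF(6) cF(1) a1 by (auto intro!: holomorphic_intros hol1 hol2 simp: h1_def)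
  have ReP: "Re (P z) > 0" if "z \<in> ball 0 1" for z
  proof -
    have "Re (1 + z * h2 z / h1 z) > \<alpha>" using cF(7)[OF that] by (simp add: h1_def h2_def)
    then show ?thesis unfolding P_def using a1 by (simp add: Re_divide_of_real)
  qed
  define W where "W = (\<lambda>z. (P z - 1) / (P z + 1))"
  have Pnz: "P z + 1 \<noteq> 0" if "z \<in> ball 0 1" for z
  proof
    assume "P z + 1 = 0"
    then have "Re (P z + 1) = 0" by simp
    with ReP[OF that] show False by simp
  qed
  have holW: "W holomorphic_on ball 0 1" unfolding W_def using Pnz
    by (auto intro!: holomorphic_intros holP)
  have P0: "P 0 = 1" unfolding P_def using a1 by (simp add: field_simps)
  have W0: "W 0 = 0" unfolding W_def P0 by simp
  have Wlt: "norm (W z) < 1" if "norm z < 1" for z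
  proof -
    have zb: "z \<in> ball 0 1" using that by simp
    have "norm (P z - 1) < norm (P z + 1)"
    proof -
      have "(norm (P z - 1))^2 < (norm (P z + 1))^2"
        unfolding cmod_power2 using ReP[OF zb] by (simp add: power2_eq_square algebra_simps)
      then show ?thesis by (simp add: power_less_imp_less_base)
    qed
    then show ?thesis unfolding W_def using Pnz[OF zb] by (simp add: norm_divide divide_less_eq)
  qed
  have Wle: "norm (W z) \<le> norm z"
    using Schwarz_Lemma(1)[OF holW W0 Wlt, of z] z by simp
  have PW: "P z = (1 + W z) / (1 - W z)"
  proof -
    have a: "1 - W z = 2 / (P z + 1)" unfolding W_def using Pnz[OF z] by (simp add: field_simps)
    have b: "1 + W z = 2 * P z / (P z + 1)" unfolding W_def using Pnz[OF z] by (simp add: field_simps)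
    show ?thesis unfolding a b using Pnz[OF z] by simp
  qed
  have "Re (P z) \<ge> (1 - norm z) / (1 + norm z)"
    unfolding PW by (rule Re_cayley_bound[OF Wle]) (use z in simp)
  moreover have "z * h2 z / h1 z = of_real (1 - \<alpha>) * P z - of_real (1 - \<alpha>)"
  proof -
    have nz: "complex_of_real (1 - \<alpha>) \<noteq> 0" using a1 by (simp add: of_real_eq_0_iff)
    have "of_real (1 - \<alpha>) * P z = 1 + z * h2 z / h1 z - of_real \<alpha>"
      unfolding P_def using nz by simp
    then show ?thesis by (simp add: algebra_simps)
  qed
  ultimately have "Re (z * h2 z / h1 z) \<ge> (1 - \<alpha>) * ((1 - norm z) / (1 + norm z)) - (1 - \<alpha>)"
  proof -
    assume A: "(1 - norm z) / (1 + norm z) \<le> Re (P z)" and B: "z * h2 z / h1 z = of_real (1 - \<alpha>) * P z - of_real (1 - \<alpha>)"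
    have "Re (z * h2 z / h1 z) = (1 - \<alpha>) * Re (P z) - (1 - \<alpha>)" unfolding B by simp
    moreover have "(1 - \<alpha>) * ((1 - norm z) / (1 + norm z)) \<le> (1 - \<alpha>) * Re (P z)"
      using mult_left_mono[OF A, of "1 - \<alpha>"] a1 by simp
    ultimately show ?thesis by simp
  qed
  also have "(1 - \<alpha>) * ((1 - norm z) / (1 + norm z)) - (1 - \<alpha>) = - 2 * (1 - \<alpha>) * norm z / (1 + norm z)"
  proof -
    have np: "1 + norm z \<noteq> 0" by (smt (verit) norm_ge_zero)
    show ?thesis using np by (simp add: field_simps)
  qed
  finally show ?thesis by (simp add: h1_def h2_def)
qed

lemma distortion:
  assumes F: "class_F \<alpha> h g" and a1: "\<alpha> < 1" and z: "z \<in> ball 0 1"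
  shows "(1 + norm z) powr (- (2 * (1 - \<alpha>))) \<le> norm (deriv h z)"
proof (cases "z = 0")
  case True
  then show ?thesis using class_F_D(5)[OF F] by simp
next
  case False
  note cF = class_F_D[OF F]
  define h1 where "h1 = deriv h"
  define h2 where "h2 = deriv h1"
  have hol1: "h1 holomorphic_on ball 0 1" unfolding h1_def by (intro holomorphic_deriv cF(1)) auto
  define r where "r = norm z"
  define u where "u = z / of_real r"
  have r0: "r > 0" and r1: "r < 1" using False z by (auto simp: r_def)
  have nu: "norm u = 1" using r0 by (simp add: u_def r_def norm_divide)
  have zu: "z = of_real r * u" using r0 by (simp add: u_def)
  define c where "c = 2 * (1 - \<alpha>)"
  define \<psi> where "\<psi> = (\<lambda>\<rho>. ln (norm (h1 (of_real \<rho> * u))) + c * ln (1 + \<rho>))"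
  have inD: "of_real \<rho> * u \<in> ball 0 1" if "0 \<le> \<rho>" "\<rho> \<le> r" for \<rho>
    using that r1 nu by (simp add: norm_mult)
  have h1nz: "h1 (of_real \<rho> * u) \<noteq> 0" if "0 \<le> \<rho>" "\<rho> \<le> r" for \<rho>
    using cF(6)[OF inD[OF that]] by (simp add: h1_def)
  have "\<psi> 0 \<le> \<psi> r"
  proof (rule DERIV_nonneg_imp_increasing_open[of 0 r \<psi>])
    show "0 \<le> r" using r0 by simp
    have c1: "continuous_on {0..r} (\<lambda>\<rho>. h1 (of_real \<rho> * u))"
      apply (rule continuous_on_compose2[OF holomorphic_on_imp_continuous_on[OF hol1]])
      using inD by (auto intro!: continuous_intros)
    show "continuous_on {0..r} \<psi>" unfolding \<psi>_def
      using h1nz by (auto intro!: continuous_intros c1)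
  next
    fix \<rho> assume \<rho>: "0 < \<rho>" "\<rho> < r"
    have inD': "of_real \<rho> * u \<in> ball 0 1" using inD \<rho> by simp
    have d1: "((\<lambda>t. of_real t * u) has_vector_derivative u) (at \<rho>)"
      by (auto intro!: derivative_eq_intros simp: has_real_derivative_iff_has_vector_derivative[symmetric])
    have d2: "(h1 has_field_derivative h2 (of_real \<rho> * u)) (at (of_real \<rho> * u))"
      unfolding h2_def by (rule holomorphic_derivI[OF hol1 _ inD']) simp
    have d3: "((\<lambda>t. h1 (of_real t * u)) has_vector_derivative u * h2 (of_real \<rho> * u)) (at \<rho>)"
      using field_vector_diff_chain_at[OF d1 d2] by (simp add: o_def)
    define A where "A = h1 (of_real \<rho> * u)"
    define B where "B = h2 (of_real \<rho> * u)"
    have Anz: "A \<noteq> 0" unfolding A_def using h1nz \<rho> by simp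
    have d4: "((\<lambda>t. norm (h1 (of_real t * u))) has_real_derivative Re (cnj A * (u * B)) / norm A) (at \<rho>)"
      using norm_has_real_derivative[OF d3] Anz by (simp add: A_def B_def)
    have d5: "(\<psi> has_real_derivative (Re (cnj A * (u * B)) / norm A / norm A + c * (1 / (1 + \<rho>)))) (at \<rho>)"
    proof -
      have pA: "0 < norm (h1 (of_real \<rho> * u))" using Anz by (simp add: A_def)
      have a: "((\<lambda>t. ln (norm (h1 (of_real t * u)))) has_real_derivative
          (1 / norm (h1 (of_real \<rho> * u))) * (Re (cnj A * (u * B)) / norm A)) (at \<rho>)"
        by (rule DERIV_chain2[OF DERIV_ln_divide[OF pA] d4])
      have b: "((\<lambda>t. c * ln (1 + t)) has_real_derivative c * (1 / (1 + \<rho>))) (at \<rho>)"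
        using \<rho> by (auto intro!: derivative_eq_intros)
      show ?thesis unfolding \<psi>_def using DERIV_add[OF a b] by (simp add: A_def)
    qed
    have e: "Re (cnj A * (u * B)) / norm A / norm A = Re ((of_real \<rho> * u) * B / A) / \<rho>"
    proof -
      have "cnj A * (u * B) / of_real ((norm A)^2) = u * B / A"
      proof -
        have "of_real ((norm A)^2) = A * cnj A" by (rule complex_norm_square)
        then show ?thesis using Anz by (simp add: field_simps)
      qed
      then have "Re (cnj A * (u * B)) / (norm A)^2 = Re (u * B / A)"
        by (metis Re_divide_of_real)
      moreover have "Re ((of_real \<rho> * u) * B / A) / \<rho> = Re (u * B / A)"
      proof -
        have "(of_real \<rho> * u) * B / A = of_real \<rho> * (u * B / A)" by simp
        moreover have "Re (of_real \<rho> * Y) = \<rho> * Re Y" for Y by simp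
        ultimately show ?thesis using \<rho> by (simp only:) simp
      qed
      ultimately show ?thesis by (simp add: power2_eq_square)
    qed
    have bnd: "Re ((of_real \<rho> * u) * B / A) \<ge> - c * \<rho> / (1 + \<rho>)"
      using Re_P_bound[OF F a1 inD'] \<rho> nu by (simp add: A_def B_def h1_def h2_def c_def norm_mult)
    have "Re ((of_real \<rho> * u) * B / A) / \<rho> \<ge> - c / (1 + \<rho>)"
    proof -
      have "Re ((of_real \<rho> * u) * B / A) / \<rho> \<ge> (- c * \<rho> / (1 + \<rho>)) / \<rho>"
        using divide_right_mono[OF bnd, of \<rho>] \<rho> by simp
      also have "(- c * \<rho> / (1 + \<rho>)) / \<rho> = - c / (1 + \<rho>)" using \<rho> by simp
      finally show ?thesis .
    qed
    then show "\<exists>y. (\<psi> has_real_derivative y) (at \<rho>) \<and> 0 \<le> y"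
      using d5 e by (intro exI[of _ "Re (cnj A * (u * B)) / norm A / norm A + c * (1 / (1 + \<rho>))"]) simp
  qed
  then have "0 \<le> ln (norm (h1 z)) + c * ln (1 + r)"
    using cF(5) by (simp add: \<psi>_def h1_def zu)
  then have "- c * ln (1 + r) \<le> ln (norm (h1 z))" by simp
  moreover have pz: "norm (h1 z) > 0" using h1nz[of r] r0 zu by simp
  ultimately have "exp (- c * ln (1 + r)) \<le> exp (ln (norm (h1 z)))" by (simp only: exp_le_cancel_iff)
  then have "exp (- c * ln (1 + r)) \<le> norm (h1 z)" using pz by (simp only: exp_ln)
  then show ?thesis using r0 by (simp add: powr_def r_def c_def h1_def)
qed




lemma w_setup:
  assumes F: "class_F \<alpha> h g"
  obtains w where "w holomorphic_on ball 0 1" "w 0 = 0"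
    "\<And>z. z \<in> ball 0 1 \<Longrightarrow> h z = z * (1 + w z) * deriv h z"
    "\<And>z. z \<in> ball 0 1 \<Longrightarrow> deriv h z = (1 + w z) * deriv h z + z * deriv w z * deriv h z
                                       + z * (1 + w z) * deriv (deriv h) z"
proof -
  note cF = class_F_D[OF F]
  define h1 where "h1 = deriv h"
  define h2 where "h2 = deriv h1"
  have hol1: "h1 holomorphic_on ball 0 1" unfolding h1_def by (intro holomorphic_deriv cF(1)) auto
  define q where "q = (\<lambda>z. if z = 0 then deriv h 0 else (h z - h 0) / (z - 0))"
  have holq: "q holomorphic_on ball 0 1" unfolding q_def
    by (rule pole_lemma_open[OF cF(1)]) simp
  have hq: "h z = z * q z" for z
    using cF(3) by (cases "z = 0") (auto simp: q_def)
  define w where "w = (\<lambda>z. q z / h1 z - 1)"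
  have holw: "w holomorphic_on ball 0 1" unfolding w_def
    using cF(6) cF(1) by (auto intro!: holomorphic_intros holq hol1 simp: h1_def)
  have w0: "w 0 = 0" unfolding w_def using cF(5) by (simp add: q_def h1_def)
  have eq: "h z = z * (1 + w z) * h1 z" if "z \<in> ball 0 1" for z
    using cF(6)[OF that] hq[of z] by (simp add: w_def h1_def)
  have der: "h1 z = (1 + w z) * h1 z + z * deriv w z * h1 z + z * (1 + w z) * h2 z"
    if z: "z \<in> ball 0 1" for z
  proof -
    have dw: "(w has_field_derivative deriv w z) (at z)"
      by (rule holomorphic_derivI[OF holw _ z]) simp
    have dh1: "(h1 has_field_derivative h2 z) (at z)"
      unfolding h2_def by (rule holomorphic_derivI[OF hol1 _ z]) simp
    have "((\<lambda>z. z * (1 + w z) * h1 z) has_field_derivative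
          ((1 * (1 + w z) + z * deriv w z) * h1 z + z * (1 + w z) * h2 z)) (at z)"
      by (rule derivative_eq_intros dw dh1 refl)+ simp
    then have "(h has_field_derivative
          ((1 * (1 + w z) + z * deriv w z) * h1 z + z * (1 + w z) * h2 z)) (at z)"
      by (rule has_field_derivative_transform_within_open[OF _ open_ball z]) (simp add: eq)
    moreover have "(h has_field_derivative h1 z) (at z)"
      unfolding h1_def by (rule holomorphic_derivI[OF cF(1) _ z]) simp
    ultimately show ?thesis
      by (metis (no_types, lifting) DERIV_unique distrib_right mult_1)
  qed
  show ?thesis
    by (rule that[OF holw w0]) (use eq der in \<open>auto simp: h1_def h2_def\<close>)
qed

lemma Re_jack_bound:
  fixes w k :: complex
  assumes "norm w = 1" "Im k = 0" "Re k \<ge> 1" "1 + w \<noteq> 0"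
  shows "Re ((1 - k * w) / (1 + w)) \<le> 0"
proof -
  obtain x y where w: "w = Complex x y" by (cases w)
  obtain a where k: "k = of_real a" using assms(2) by (metis complex_is_Real_iff Reals_cases)
  have a: "a \<ge> 1" using assms(3) k by simp
  have n: "x^2 + y^2 = 1" using assms(1) unfolding w by (simp add: cmod_def)
  have x: "x \<ge> -1"
  proof -
    have "x^2 \<le> 1" using n zero_le_power2[of y] by linarith
    then have "\<bar>x\<bar> \<le> 1" by (simp add: abs_square_le_1)
    then show ?thesis by linarith
  qed
  have "Re ((1 - k * w) / (1 + w)) = ((1 - a*x)*(1+x) - a*y*y) / ((1+x)^2 + y^2)"
    unfolding w k by (simp add: Re_divide power2_eq_square algebra_simps)
  also have "(1 - a*x)*(1+x) - a*y*y = (1 - a) * (1 + x)"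
  proof -
    have "y*y = 1 - x*x" using n by (simp add: power2_eq_square algebra_simps)
    then have "(1 - a*x)*(1+x) - a*y*y = (1 - a*x)*(1+x) - a*(1 - x*x)" by (simp add: mult.assoc)
    also have "\<dots> = (1 - a) * (1 + x)" by (simp add: algebra_simps)
    finally show ?thesis .
  qed
  also have "(1 - a) * (1 + x) / ((1+x)^2 + y^2) \<le> 0"
    using a x by (intro divide_nonpos_nonneg mult_nonpos_nonneg) auto
  finally show ?thesis .
qed

lemma w_lt_1:
  assumes F: "class_F \<alpha> h g" and a0: "0 \<le> \<alpha>"
    and holw: "w holomorphic_on ball 0 1" and w0: "w 0 = 0"
    and der: "\<And>z. z \<in> ball 0 1 \<Longrightarrow> deriv h z = (1 + w z) * deriv h z + z * deriv w z * deriv h z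
                                       + z * (1 + w z) * deriv (deriv h) z"
    and z: "z \<in> ball 0 1"
  shows "norm (w z) < 1"
proof (rule ccontr)
  assume "\<not> norm (w z) < 1"
  then have wz: "1 \<le> norm (w z)" by simp
  note cF = class_F_D[OF F]
  have contw: "continuous_on (ball 0 1) w" by (rule holomorphic_on_imp_continuous_on[OF holw])
  have sub: "cball 0 (norm z) \<subseteq> ball 0 1" using z by auto
  define C where "C = cball 0 (norm z) \<inter> (\<lambda>y. norm (w y)) -` {1..}"
  have "closed C" unfolding C_def
    by (rule continuous_closed_preimage)
       (auto intro!: continuous_intros continuous_on_subset[OF contw sub])
  then have cC: "compact C" unfolding C_def by (simp add: compact_eq_bounded_closed bounded_Int)
  have zC: "z \<in> C" unfolding C_def using wz by simp
  obtain z0 where z0C: "z0 \<in> C" and z0min: "\<And>y. y \<in> C \<Longrightarrow> norm z0 \<le> norm y"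
    using continuous_attains_inf[OF cC _ continuous_on_norm_id] zC by blast
  define r0 where "r0 = norm z0"
  have z0D: "z0 \<in> ball 0 1" using z0C z unfolding C_def by auto
  have wz0ge: "1 \<le> norm (w z0)" using z0C unfolding C_def by simp
  have r0p: "r0 > 0" using wz0ge w0 unfolding r0_def by (cases "z0 = 0") auto
  have r0le: "r0 \<le> norm z" using z0C unfolding C_def r0_def by simp
  have lt: "norm (w y) < 1" if "norm y < r0" for y
  proof (rule ccontr)
    assume "\<not> norm (w y) < 1"
    then have "y \<in> C" unfolding C_def using that r0le by auto
    then show False using z0min that unfolding r0_def by fastforce
  qed
  have cb: "cball 0 r0 \<subseteq> ball 0 1" using r0le sub by auto
  have le: "norm (w y) \<le> 1" if "norm y \<le> r0" for y
  proof -
    have "w ` closure (ball 0 r0) \<subseteq> cball 0 1"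
    proof (rule image_closure_subset)
      show "continuous_on (closure (ball 0 r0)) w" using r0p cb continuous_on_subset[OF contw] by simp
      show "w ` ball 0 r0 \<subseteq> cball 0 1" using lt by (force intro: less_imp_le)
    qed simp
    then have "w y \<in> cball 0 1" using that r0p by (auto simp: image_subset_iff)
    then show ?thesis by simp
  qed
  have wz0: "norm (w z0) = 1" using le[of z0] wz0ge unfolding r0_def by simp
  define W0 where "W0 = w z0"
  define W1 where "W1 = deriv w z0"
  have W0nz: "W0 \<noteq> 0" using wz0 unfolding W0_def by auto
  define u0 where "u0 = z0 / of_real r0"
  have nu0: "norm u0 = 1" using r0p by (simp add: u0_def norm_divide r0_def)
  have z0u: "z0 = of_real r0 * u0" using r0p by (simp add: u0_def)
  have dwat: "(w has_field_derivative deriv w y) (at y)" if "y \<in> ball 0 1" for y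
    by (rule holomorphic_derivI[OF holw _ that]) simp
  have schw: "norm (w (of_real \<rho> * u0)) \<le> \<rho> / r0" if "0 \<le> \<rho>" "\<rho> < r0" for \<rho>
  proof -
    define v where "v = (\<lambda>\<zeta>. w (of_real r0 * \<zeta>))"
    have holv: "v holomorphic_on ball 0 1" unfolding v_def
      apply (rule holomorphic_on_compose_gen[where g=w and t="ball 0 1", unfolded o_def])
      using holw cb r0p by (auto intro!: holomorphic_intros simp: norm_mult)
    have v0: "v 0 = 0" using w0 by (simp add: v_def)
    have vl: "norm (v \<zeta>) < 1" if "norm \<zeta> < 1" for \<zeta>
      unfolding v_def using that r0p by (intro lt) (simp add: norm_mult)
    have "norm (v (of_real (\<rho>/r0) * u0)) \<le> norm (of_real (\<rho>/r0) * u0)"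
    proof (rule Schwarz_Lemma(1)[OF holv v0 vl])
      have "norm (of_real (\<rho>/r0) * u0) = \<rho>/r0" using that nu0 r0p by (simp add: norm_mult norm_divide)
      also have "\<dots> < 1" using that r0p by simp
      finally show "norm (of_real (\<rho>/r0) * u0) < 1" .
    qed
    moreover have "of_real r0 * (of_real (\<rho>/r0) * u0) = of_real \<rho> * u0" using r0p by simp
    ultimately show ?thesis using that nu0 r0p by (simp add: v_def norm_mult norm_divide)
  qed
  have rad: "Re (cnj W0 * (u0 * W1)) \<ge> 1 / r0"
  proof (rule ccontr)
    assume "\<not> ?thesis"
    then have neg: "Re (cnj W0 * (u0 * W1)) / norm W0 - 1 / r0 < 0" using wz0 by (simp add: W0_def)
    define G where "G = (\<lambda>t::real. norm (w (of_real t * u0)) - t / r0)"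
    have d1: "((\<lambda>t. w (of_real t * u0)) has_vector_derivative deriv w z0 * u0) (at r0)"
    proof -
      have dz0: "(w has_field_derivative deriv w z0) (at ((\<lambda>x. x * u0) (of_real r0)))"
        using dwat[OF z0D] z0u by simp
      have dg: "((\<lambda>x. x * u0) has_field_derivative u0) (at (of_real r0))"
        by (auto intro!: derivative_eq_intros)
      have "((\<lambda>x. w (x * u0)) has_field_derivative deriv w z0 * u0) (at (of_real r0))"
        using DERIV_chain2[OF dz0 dg] .
      then show ?thesis using has_vector_derivative_real_field by blast
    qed
    have d2: "(G has_real_derivative (Re (cnj W0 * (u0 * W1)) / norm W0 - 1 / r0)) (at r0)"
      unfolding G_def
      apply (rule DERIV_diff)
      using norm_has_real_derivative[OF d1] W0nz z0u apply (simp add: W0_def W1_def mult.commute)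
      using r0p by (auto intro!: derivative_eq_intros)
    obtain d where d: "d > 0" and dd: "\<And>h. h > 0 \<Longrightarrow> h < d \<Longrightarrow> G r0 < G (r0 - h)"
      using DERIV_neg_dec_left[OF d2 neg] by blast
    define hh where "hh = min (d/2) (r0/2)"
    have hh: "hh > 0" "hh < d" "hh < r0" using d r0p by (auto simp: hh_def)
    have "G r0 = 0" unfolding G_def using wz0 z0u r0p by simp
    moreover have "G (r0 - hh) \<le> 0" unfolding G_def using schw[of "r0 - hh"] hh by simp
    ultimately show False using dd[OF hh(1,2)] by simp
  qed
  have ang: "Im (cnj W0 * (z0 * W1)) = 0"
  proof -
    define \<Phi> where "\<Phi> = (\<lambda>t::real. norm (w (z0 * exp (of_real t * \<i>))))"
    have d1: "((\<lambda>t. w (z0 * exp (of_real t * \<i>))) has_vector_derivative deriv w z0 * (z0 * \<i>)) (at 0)"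
    proof -
      have dz0: "(w has_field_derivative deriv w z0) (at ((\<lambda>x. z0 * exp (x * \<i>)) (of_real 0)))"
        using dwat[OF z0D] by simp
      have dg: "((\<lambda>x. z0 * exp (x * \<i>)) has_field_derivative z0 * \<i>) (at (of_real 0))"
        by (auto intro!: derivative_eq_intros)
      have "((\<lambda>x. w (z0 * exp (x * \<i>))) has_field_derivative deriv w z0 * (z0 * \<i>)) (at (of_real 0))"
        using DERIV_chain2[OF dz0 dg] .
      then show ?thesis using has_vector_derivative_real_field by fastforce
    qed
    have d2: "(\<Phi> has_real_derivative Re (cnj W0 * (deriv w z0 * (z0 * \<i>))) / norm W0) (at 0)"
      unfolding \<Phi>_def using norm_has_real_derivative[OF d1] W0nz by (simp add: W0_def)
    have "Re (cnj W0 * (deriv w z0 * (z0 * \<i>))) / norm W0 = 0"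
    proof (rule DERIV_local_max[OF d2, of 1])
      show "\<forall>y. \<bar>0 - y\<bar> < 1 \<longrightarrow> \<Phi> y \<le> \<Phi> 0"
      proof (intro allI impI)
        fix y :: real
        have "norm (z0 * exp (of_real y * \<i>)) = r0" by (simp add: norm_mult r0_def)
        then have "\<Phi> y \<le> 1" unfolding \<Phi>_def using le by simp
        then show "\<Phi> y \<le> \<Phi> 0" using wz0 by (simp add: \<Phi>_def)
      qed
    qed simp
    then have "Re (cnj W0 * (deriv w z0 * (z0 * \<i>))) = 0" using W0nz by simp
    moreover have "cnj W0 * (deriv w z0 * (z0 * \<i>)) = \<i> * (cnj W0 * (z0 * W1))"
      by (simp add: W1_def algebra_simps)
    ultimately show ?thesis by simp
  qed
  define k where "k = cnj W0 * (z0 * W1)"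
  have kre: "Re k \<ge> 1"
  proof -
    have "Re k = r0 * Re (cnj W0 * (u0 * W1))"
      unfolding k_def z0u by (simp add: algebra_simps)
    also have "\<dots> \<ge> r0 * (1 / r0)" using rad r0p by (intro mult_left_mono) auto
    finally show ?thesis using r0p by simp
  qed
  have kim: "Im k = 0" using ang by (simp add: k_def)
  have cW: "cnj W0 * W0 = 1"
  proof -
    have "cnj W0 * W0 = of_real ((norm W0)^2)" using complex_norm_square[of W0] by (simp add: mult.commute)
    then show ?thesis using wz0 by (simp add: W0_def)
  qed
  have zW1: "z0 * W1 = k * W0"
    unfolding k_def using cW by (metis mult.assoc mult.commute mult_1)
  define H1 where "H1 = deriv h z0"
  define H2 where "H2 = deriv (deriv h) z0"
  have H1nz: "H1 \<noteq> 0" using cF(6)[OF z0D] by (simp add: H1_def)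
  have dz: "H1 = (1 + W0) * H1 + z0 * W1 * H1 + z0 * (1 + W0) * H2"
    using der[OF z0D] by (simp add: H1_def H2_def W0_def W1_def)
  have onep: "1 + W0 \<noteq> 0"
  proof
    assume A: "1 + W0 = 0"
    then have "H1 = z0 * W1 * H1" using dz by simp
    then have "z0 * W1 = 1" using H1nz by (metis mult.commute mult_cancel_left1)
    then have "k * W0 = 1" using zW1 by simp
    moreover have "W0 = -1" using A by (simp add: add_eq_0_iff)
    ultimately have "k = -1" by (simp add: minus_equation_iff)
    then show False using kre by simp
  qed
  have "1 + z0 * H2 / H1 = (1 - k * W0) / (1 + W0)"
  proof -
    have "1 - z0 * W1 = (1 + W0) * (1 + z0 * H2 / H1)"
    proof -
      have e1: "H1 * ((1 + W0) * (1 + z0 * H2 / H1)) = (1 + W0) * H1 + z0 * (1 + W0) * H2"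
        using H1nz by (simp add: field_simps)
      have "H1 * (1 - z0 * W1) = (1 + W0) * H1 + z0 * (1 + W0) * H2"
        using dz by (simp add: algebra_simps)
      then have "H1 * (1 - z0 * W1) = H1 * ((1 + W0) * (1 + z0 * H2 / H1))" using e1 by simp
      then show ?thesis using H1nz by simp
    qed
    then show ?thesis using onep zW1 by (simp add: field_simps)
  qed
  then have "Re (1 + z0 * H2 / H1) \<le> 0"
    using Re_jack_bound[OF _ kim kre onep] wz0 by (simp add: W0_def)
  moreover have "Re (1 + z0 * H2 / H1) > \<alpha>" using cF(7)[OF z0D] by (simp add: H1_def H2_def)
  ultimately show False using a0 by simp
qed




lemma logcoord:
  assumes F: "class_F \<alpha> h g" and a0: "0 \<le> \<alpha>"
  obtains K where "K holomorphic_on {s. Re s < 0}"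
    "\<And>s. Re s < 0 \<Longrightarrow> exp (K s) = h (exp s)"
    "\<And>s. Re s < 0 \<Longrightarrow> Re (deriv K s) > 0"
    "\<And>c. c < 0 \<Longrightarrow> \<exists>M. \<forall>s. Re s \<le> c \<longrightarrow> norm (K s - s) \<le> M"
proof -
  note cF = class_F_D[OF F]
  obtain w where holw: "w holomorphic_on ball 0 1" and w0: "w 0 = 0"
    and eq: "\<And>z. z \<in> ball 0 1 \<Longrightarrow> h z = z * (1 + w z) * deriv h z"
    and der: "\<And>z. z \<in> ball 0 1 \<Longrightarrow> deriv h z = (1 + w z) * deriv h z + z * deriv w z * deriv h z
                                       + z * (1 + w z) * deriv (deriv h) z"
    using w_setup[OF F] by blast
  have wlt: "norm (w z) < 1" if "z \<in> ball 0 1" for z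
    by (rule w_lt_1[OF F a0 holw w0 der that])
  have w1: "1 + w z \<noteq> 0" if "z \<in> ball 0 1" for z
  proof
    assume "1 + w z = 0"
    then have "w z = -1" by (simp add: add_eq_0_iff)
    with wlt[OF that] show False by simp
  qed
  define h1 where "h1 = deriv h"
  have hol1: "h1 holomorphic_on ball 0 1" unfolding h1_def by (intro holomorphic_deriv cF(1)) auto
  define q where "q = (\<lambda>z. (1 + w z) * h1 z)"
  have holq: "q holomorphic_on ball 0 1" unfolding q_def by (intro holomorphic_intros holw hol1)
  have qnz: "q z \<noteq> 0" if "z \<in> ball 0 1" for z
    using w1[OF that] cF(6)[OF that] by (simp add: q_def h1_def)
  obtain L where holL: "L holomorphic_on ball 0 1" and expL: "\<And>x. x \<in> ball 0 1 \<Longrightarrow> exp (L x) = q x"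
    using holomorphic_logarithm_exists[OF convex_ball open_ball holq qnz, of 0] by auto
  define H where "H = {s::complex. Re s < 0}"
  have oH: "open H" unfolding H_def by (rule open_halfspace_Re_lt)
  have expD: "exp s \<in> ball 0 1" if "s \<in> H" for s
    using that by (simp add: H_def norm_exp_eq_Re)
  define K where "K = (\<lambda>s. s + L (exp s))"
  have holK: "K holomorphic_on H"
  proof -
    have "(L \<circ> exp) holomorphic_on H"
      by (rule holomorphic_on_compose_gen[OF _ holL]) (use expD in \<open>auto intro!: holomorphic_intros\<close>)
    then show ?thesis unfolding K_def o_def by (intro holomorphic_intros)
  qed
  have expK: "exp (K s) = h (exp s)" if "s \<in> H" for s
    using expL[OF expD[OF that]] eq[OF expD[OF that]]
    by (simp add: K_def exp_add q_def h1_def mult.assoc)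
  have dK: "deriv K s = 1 / (1 + w (exp s))" if s: "s \<in> H" for s
  proof -
    have dKs: "(K has_field_derivative deriv K s) (at s)"
      by (rule holomorphic_derivI[OF holK oH s])
    have d1: "((\<lambda>s. exp (K s)) has_field_derivative exp (K s) * deriv K s) (at s)"
      by (rule derivative_eq_intros dKs refl)+
    have d1': "((\<lambda>s. h (exp s)) has_field_derivative exp (K s) * deriv K s) (at s)"
      by (rule has_field_derivative_transform_within_open[OF d1 oH s]) (simp add: expK)
    have dh: "(h has_field_derivative h1 (exp s)) (at (exp s))"
      unfolding h1_def by (rule holomorphic_derivI[OF cF(1) _ expD[OF s]]) simp
    have d2: "((\<lambda>s. h (exp s)) has_field_derivative h1 (exp s) * exp s) (at s)"
      using DERIV_chain2[OF dh DERIV_exp] .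
    have e: "exp (K s) * deriv K s = h1 (exp s) * exp s" using DERIV_unique[OF d1' d2] .
    have "exp s * (1 + w (exp s)) * h1 (exp s) * deriv K s = h1 (exp s) * exp s"
      using e expK[OF s] eq[OF expD[OF s]] by (simp add: h1_def)
    moreover have "h1 (exp s) \<noteq> 0" using cF(6)[OF expD[OF s]] by (simp add: h1_def)
    ultimately have A: "(exp s * h1 (exp s)) * ((1 + w (exp s)) * deriv K s) = (exp s * h1 (exp s)) * 1"
      by (simp add: algebra_simps)
    have "exp s * h1 (exp s) \<noteq> 0" using \<open>h1 (exp s) \<noteq> 0\<close> by simp
    then have "(1 + w (exp s)) * deriv K s = 1" using A mult_left_cancel by blast
    then show ?thesis using w1[OF expD[OF s]] by (simp add: field_simps)
  qed
  have ReK: "Re (deriv K s) > 0" if s: "s \<in> H" for s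
  proof -
    define v where "v = w (exp s)"
    have v1: "norm v < 1" using wlt[OF expD[OF s]] by (simp add: v_def)
    have "Re v > -1" using v1 abs_Re_le_cmod[of v] by linarith
    then have "Re (1 + v) > 0" by simp
    moreover have "1 + v \<noteq> 0" using w1[OF expD[OF s]] by (simp add: v_def)
    ultimately have "Re (1 / (1 + v)) > 0"
      by (simp add: Re_divide divide_pos_pos complex_neq_0 sum_power2_gt_zero_iff)
    then show ?thesis using dK[OF s] by (simp add: v_def)
  qed
  have bnd: "\<exists>M. \<forall>s. Re s \<le> c \<longrightarrow> norm (K s - s) \<le> M" if c: "c < 0" for c
  proof -
    have ec: "exp c < 1" using c by simp
    have sub: "cball (0::complex) (exp c) \<subseteq> ball 0 1"
    proof
      fix x :: complex assume "x \<in> cball 0 (exp c)"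
      then have "dist 0 x \<le> exp c" by simp
      then have "dist 0 x < 1" by (rule le_less_trans[OF _ ec])
      then show "x \<in> ball 0 1" by simp
    qed
    have "compact (L ` cball 0 (exp c))"
      by (rule compact_continuous_image[OF continuous_on_subset[OF holomorphic_on_imp_continuous_on[OF holL] sub]])
         simp
    then obtain M where M: "\<And>x. x \<in> cball 0 (exp c) \<Longrightarrow> norm (L x) \<le> M"
      by (meson compact_imp_bounded bounded_iff imageI)
    show ?thesis
    proof (intro exI allI impI)
      fix s :: complex assume "Re s \<le> c"
      then have "exp s \<in> cball 0 (exp c)" by (simp add: norm_exp_eq_Re)
      then show "norm (K s - s) \<le> M" using M by (simp add: K_def)
    qed
  qed
  show ?thesis
    by (rule that[of K]) (use holK expK ReK bnd in \<open>auto simp: H_def\<close>)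
qed




lemma Re_inverse_pos:
  fixes a :: complex assumes "Re a > 0" shows "Re (1 / a) > 0"
proof -
  have "a \<noteq> 0" using assms by auto
  then have "(Re a)^2 + (Im a)^2 > 0" by (simp add: complex_neq_0)
  then show ?thesis using assms by (simp add: Re_divide)
qed

lemma inj_halfplane:
  assumes holK: "K holomorphic_on {s. Re s < 0}"
    and ReK: "\<And>s. Re s < 0 \<Longrightarrow> Re (deriv K s) > 0"
  shows "inj_on K {s. Re s < 0}"
proof (rule inj_onI)
  fix s1 s2 assume s1: "s1 \<in> {s. Re s < 0}" and s2: "s2 \<in> {s. Re s < 0}" and eq: "K s1 = K s2"
  show "s1 = s2"
  proof (rule ccontr)
    assume ne: "s1 \<noteq> s2"
    define d where "d = s2 - s1"
    have dnz: "d \<noteq> 0" using ne by (simp add: d_def)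
    have inH: "Re (s1 + of_real t * d) < 0" if "0 \<le> t" "t \<le> 1" for t
    proof -
      have "Re (s1 + of_real t * d) = (1 - t) * Re s1 + t * Re s2" by (simp add: d_def algebra_simps)
      moreover have "(1 - t) * Re s1 \<le> 0" using that s1 by (simp add: mult_nonneg_nonpos)
      moreover have "t * Re s2 \<le> 0" using that s2 by (simp add: mult_nonneg_nonpos)
      moreover have "(1 - t) * Re s1 < 0 \<or> t * Re s2 < 0"
        using that s1 s2 by (cases "t = 1") (auto simp: mult_pos_neg)
      ultimately show ?thesis by linarith
    qed
    have oH: "open {s::complex. Re s < 0}" by (rule open_halfspace_Re_lt)
    define \<phi> where "\<phi> = (\<lambda>t::real. Re (K (s1 + of_real t * d) / d))"
    have "\<phi> 0 < \<phi> 1"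
    proof (rule DERIV_pos_imp_increasing[of 0 1 \<phi>])
      fix t :: real assume t: "0 \<le> t" "t \<le> 1"
      have p: "s1 + of_real t * d \<in> {s. Re s < 0}" using inH[OF t] by simp
      have dK: "(K has_field_derivative deriv K (s1 + of_real t * d)) (at (s1 + of_real t * d))"
        by (rule holomorphic_derivI[OF holK oH p])
      have dK': "(K has_field_derivative deriv K (s1 + of_real t * d)) (at ((\<lambda>x. s1 + x * d) (of_real t)))"
        using dK by simp
      have dl: "((\<lambda>x. s1 + x * d) has_field_derivative d) (at (of_real t))"
        by (auto intro!: derivative_eq_intros)
      have "((\<lambda>x. K (s1 + x * d) / d) has_field_derivative deriv K (s1 + of_real t * d) * d / d) (at (of_real t))"
        using DERIV_cdivide[OF DERIV_chain2[OF dK' dl]] .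
      then have "((\<lambda>x. K (s1 + x * d) / d) has_field_derivative deriv K (s1 + of_real t * d)) (at (of_real t))"
        using dnz by simp
      then have "((\<lambda>t. K (s1 + of_real t * d) / d) has_vector_derivative deriv K (s1 + of_real t * d)) (at t)"
        by (rule has_vector_derivative_real_field)
      then have "(\<phi> has_real_derivative Re (deriv K (s1 + of_real t * d))) (at t)"
        unfolding \<phi>_def by (rule has_field_derivative_Re)
      moreover have "Re (deriv K (s1 + of_real t * d)) > 0" using ReK inH[OF t] by simp
      ultimately show "\<exists>y. (\<phi> has_real_derivative y) (at t) \<and> 0 < y" by blast
    qed simp
    moreover have "\<phi> 0 = \<phi> 1" unfolding \<phi>_def using eq by (simp add: d_def)
    ultimately show False by simp
  qed
qed

lemma path_lift:
  assumes holK: "K holomorphic_on {s. Re s < 0}"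
    and expK: "\<And>s. Re s < 0 \<Longrightarrow> exp (K s) = h (exp s)"
    and ReK: "\<And>s. Re s < 0 \<Longrightarrow> Re (deriv K s) > 0"
    and bnd: "\<And>c. c < 0 \<Longrightarrow> \<exists>M. \<forall>s. Re s \<le> c \<longrightarrow> norm (K s - s) \<le> M"
    and h0: "h 0 = 0"
    and z: "z \<in> ball 0 1" and zn: "z \<noteq> 0"
  obtains \<zeta> \<zeta>' where "\<zeta> 0 = 0" "\<zeta> 1 = z" "\<And>t. t \<in> {0..1} \<Longrightarrow> norm (\<zeta> t) \<le> norm z"
    "\<And>t. t \<in> {0..1} \<Longrightarrow> h (\<zeta> t) = of_real t * h z" "continuous_on {0..1} \<zeta>"
    "\<And>t. t \<in> {0<..<1} \<Longrightarrow> (\<zeta> has_vector_derivative \<zeta>' t) (at t)"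
proof -
  define H where "H = {s::complex. Re s < 0}"
  have oH: "open H" unfolding H_def by (rule open_halfspace_Re_lt)
  have holK': "K holomorphic_on H" using holK by (simp add: H_def)
  have injK: "inj_on K H" unfolding H_def by (rule inj_halfplane[OF holK ReK])
  obtain g where holg: "g holomorphic_on (K ` H)"
    and dgK: "\<And>s. s \<in> H \<Longrightarrow> deriv K s * deriv g (K s) = 1"
    and gK: "\<And>s. s \<in> H \<Longrightarrow> g (K s) = s"
    using holomorphic_has_inverse[OF holK' oH injK] by blast
  have oKH: "open (K ` H)" by (rule open_mapping_thm3[OF holK' oH injK])
  have contK: "continuous_on H K" by (rule holomorphic_on_imp_continuous_on[OF holK'])
  have gKH: "g p \<in> H \<and> K (g p) = p" if "p \<in> K ` H" for p
    using that gK by auto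
  have dg: "(g has_field_derivative deriv g p) (at p) \<and> Re (deriv g p) > 0" if p: "p \<in> K ` H" for p
  proof
    show "(g has_field_derivative deriv g p) (at p)" by (rule holomorphic_derivI[OF holg oKH p])
    obtain s where s: "s \<in> H" "p = K s" using p by blast
    have nz: "deriv K s \<noteq> 0" using dgK[OF s(1)] by auto
    have "deriv g p = 1 / deriv K s" using dgK[OF s(1)] s(2) nz by (simp add: field_simps mult.commute)
    then show "Re (deriv g p) > 0" using Re_inverse_pos[OF ReK] s(1) by (simp add: H_def)
  qed
  define s1 where "s1 = Ln z"
  define c where "c = Re s1"
  have nz1: "norm z < 1" "norm z > 0" using z zn by auto
  have c_eq: "c = ln (norm z)" using zn by (simp add: c_def s1_def)
  have c0: "c < 0" using nz1 c_eq by simp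
  have es1: "exp s1 = z" using zn by (simp add: s1_def)
  have s1H: "s1 \<in> H" using c0 by (simp add: H_def c_def)
  obtain M where M: "\<And>s. Re s \<le> c \<Longrightarrow> norm (K s - s) \<le> M" using bnd[OF c0] by blast
  have csub: "{s. Re s \<le> c} \<subseteq> H" using c0 by (auto simp: H_def)
  define R where "R = (\<lambda>x::real. \<exists>\<sigma>. Re \<sigma> \<le> c \<and> K \<sigma> = K s1 - of_real x)"
  have ray: "R x" if x0: "0 \<le> x" for x
  proof (rule ccontr)
    assume nR: "\<not> R x"
    define T where "T = {\<sigma>. Re \<sigma> \<le> c} \<inter> K -` ({p. Im p = Im (K s1)} \<inter> {p. Re p \<ge> Re (K s1) - x} \<inter> {p. Re p \<le> Re (K s1)})"
    have clT: "closed T" unfolding T_def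
      apply (rule continuous_closed_preimage[OF continuous_on_subset[OF contK csub] closed_halfspace_Re_le])
      by (intro closed_Int closed_halfspace_Re_le closed_halfspace_Re_ge closed_Collect_eq continuous_intros)
    have bT: "bounded T"
    proof -
      define B where "B = \<bar>c\<bar> + \<bar>Re (K s1)\<bar> + x + M + \<bar>Im (K s1)\<bar> + M"
      have "norm \<sigma> \<le> B" if "\<sigma> \<in> T" for \<sigma>
      proof -
        have a: "Re \<sigma> \<le> c" "Im (K \<sigma>) = Im (K s1)" "Re (K \<sigma>) \<ge> Re (K s1) - x"
          using that by (auto simp: T_def)
        have m: "norm (K \<sigma> - \<sigma>) \<le> M" using M a(1) .
        have r: "\<bar>Re (K \<sigma>) - Re \<sigma>\<bar> \<le> M" using abs_Re_le_cmod[of "K \<sigma> - \<sigma>"] m by simp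
        have i: "\<bar>Im (K \<sigma>) - Im \<sigma>\<bar> \<le> M" using abs_Im_le_cmod[of "K \<sigma> - \<sigma>"] m by simp
        have "\<bar>Re \<sigma>\<bar> \<le> \<bar>c\<bar> + \<bar>Re (K s1)\<bar> + x + M" using a r x0 by arith
        moreover have "\<bar>Im \<sigma>\<bar> \<le> \<bar>Im (K s1)\<bar> + M" using a i by arith
        ultimately show ?thesis using cmod_le[of \<sigma>] unfolding B_def by linarith
      qed
      then show ?thesis unfolding bounded_iff by blast
    qed
    have cT: "compact T" using clT bT by (simp add: compact_eq_bounded_closed)
    define S where "S = (\<lambda>\<sigma>. Re (K s1) - Re (K \<sigma>)) ` T"
    have TH: "T \<subseteq> H" using csub by (auto simp: T_def)
    have cS: "compact S" unfolding S_def
      by (rule compact_continuous_image[OF _ cT]) (intro continuous_intros continuous_on_subset[OF contK TH])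
    have s1T: "s1 \<in> T" by (simp add: T_def c_def x0)
    have "0 \<in> S" unfolding S_def using s1T by force
    then obtain xs where xsS: "xs \<in> S" and xsmax: "\<And>y. y \<in> S \<Longrightarrow> y \<le> xs"
      using compact_attains_sup[OF cS] by blast
    obtain \<sigma>s where \<sigma>sT: "\<sigma>s \<in> T" and xs_eq: "xs = Re (K s1) - Re (K \<sigma>s)"
      using xsS unfolding S_def by blast
    have Ks: "K \<sigma>s = K s1 - of_real xs" using \<sigma>sT xs_eq by (simp add: T_def complex_eq_iff)
    have \<sigma>sc: "Re \<sigma>s \<le> c" using \<sigma>sT by (simp add: T_def)
    have xs0: "0 \<le> xs" and xsx: "xs \<le> x" using \<sigma>sT xs_eq by (auto simp: T_def)
    have "xs \<noteq> x" using nR Ks \<sigma>sc unfolding R_def by blast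
    with xsx have xslt: "xs < x" by simp
    have \<sigma>sH: "\<sigma>s \<in> H" using \<sigma>sc csub by auto
    obtain \<epsilon> where \<epsilon>: "\<epsilon> > 0" "ball (K \<sigma>s) \<epsilon> \<subseteq> K ` H"
      using oKH \<sigma>sH by (meson imageI open_contains_ball)
    define y where "y = min x (xs + \<epsilon>/2)"
    have y: "xs < y" "y \<le> x" using xslt \<epsilon> by (auto simp: y_def)
    have inKH: "K s1 - of_real t \<in> K ` H" if "xs \<le> t" "t \<le> y" for t
    proof -
      have "dist (K \<sigma>s) (K s1 - of_real t) = \<bar>t - xs\<bar>"
        by (simp add: Ks dist_norm flip: of_real_diff)
      also have "\<dots> < \<epsilon>" using that y \<epsilon> by (auto simp: y_def)
      finally show ?thesis using \<epsilon>(2) by auto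
    qed
    define \<psi> where "\<psi> = (\<lambda>t::real. Re (g (K s1 - of_real t)))"
    have "\<psi> xs > \<psi> y"
    proof (rule DERIV_neg_imp_decreasing[of xs y \<psi>])
      show "xs < y" using y by simp
      fix t assume t: "xs \<le> t" "t \<le> y"
      have p: "K s1 - of_real t \<in> K ` H" using inKH[OF t] .
      have d1: "(g has_field_derivative deriv g (K s1 - of_real t)) (at ((\<lambda>x. K s1 - x) (of_real t)))"
        using dg[OF p] by simp
      have d2: "((\<lambda>x. K s1 - x) has_field_derivative -1) (at (of_real t))"
        by (auto intro!: derivative_eq_intros)
      have "((\<lambda>x. g (K s1 - x)) has_field_derivative deriv g (K s1 - of_real t) * -1) (at (of_real t))"
        using DERIV_chain2[OF d1 d2] .
      then have "((\<lambda>t. g (K s1 - of_real t)) has_vector_derivative deriv g (K s1 - of_real t) * -1) (at t)"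
        by (rule has_vector_derivative_real_field)
      then have "(\<psi> has_real_derivative Re (deriv g (K s1 - of_real t) * -1)) (at t)"
        unfolding \<psi>_def by (rule has_field_derivative_Re)
      moreover have "Re (deriv g (K s1 - of_real t) * -1) < 0" using dg[OF p] by simp
      ultimately show "\<exists>d. (\<psi> has_real_derivative d) (at t) \<and> d < 0" by blast
    qed
    moreover have "\<psi> xs = Re \<sigma>s" unfolding \<psi>_def using gK[OF \<sigma>sH] Ks by simp
    ultimately have \<psi>y: "\<psi> y < c" using \<sigma>sc by simp
    define \<sigma>y where "\<sigma>y = g (K s1 - of_real y)"
    have py: "K s1 - of_real y \<in> K ` H" using inKH[of y] y by simp
    have K\<sigma>y: "K \<sigma>y = K s1 - of_real y" using gKH[OF py] by (simp add: \<sigma>y_def)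
    have "\<sigma>y \<in> T" unfolding T_def using \<psi>y K\<sigma>y y xs0 by (auto simp: \<psi>_def \<sigma>y_def)
    then have "y \<in> S" unfolding S_def using K\<sigma>y by force
    then show False using xsmax y by force
  qed
  define P where "P = (\<lambda>t::real. K s1 + of_real (ln t))"
  have Pok: "P t \<in> K ` H \<and> Re (g (P t)) \<le> c \<and> K (g (P t)) = P t" if t: "0 < t" "t \<le> 1" for t
  proof -
    have "0 \<le> - ln t" using t by simp
    from ray[OF this] obtain \<sigma> where \<sigma>: "Re \<sigma> \<le> c" "K \<sigma> = K s1 - of_real (- ln t)"
      unfolding R_def by blast
    have \<sigma>H: "\<sigma> \<in> H" using \<sigma>(1) csub by auto
    have KP: "K \<sigma> = P t" using \<sigma>(2) by (simp add: P_def)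
    show ?thesis using \<sigma>H KP gK[OF \<sigma>H] \<sigma>(1) by force
  qed
  define \<zeta> where "\<zeta> = (\<lambda>t::real. if t = 0 then 0 else exp (g (P t)))"
  define Z where "Z = (\<lambda>t::real. exp (g (P t)))"
  have hz: "h z = exp (K s1)" using expK[of s1] s1H es1 by (simp add: H_def)
  have P1: "P 1 = K s1" by (simp add: P_def)
  have \<zeta>1: "\<zeta> 1 = z" using gK[OF s1H] es1 by (simp add: \<zeta>_def P1)
  have \<zeta>0: "\<zeta> 0 = 0" by (simp add: \<zeta>_def)
  have nrm: "norm (\<zeta> t) \<le> norm z" if "t \<in> {0..1}" for t
  proof (cases "t = 0")
    case False
    then have t: "0 < t" "t \<le> 1" using that by auto
    have "norm (\<zeta> t) = exp (Re (g (P t)))" using False by (simp add: \<zeta>_def norm_exp_eq_Re)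
    also have "\<dots> \<le> exp c" using Pok[OF t] by simp
    also have "\<dots> = norm z" using c_eq nz1 by simp
    finally show ?thesis .
  qed (simp add: \<zeta>_def)
  have hval: "h (\<zeta> t) = of_real t * h z" if "t \<in> {0..1}" for t
  proof (cases "t = 0")
    case False
    then have t: "0 < t" "t \<le> 1" using that by auto
    have gH: "g (P t) \<in> H" using Pok[OF t] csub by auto
    have "h (\<zeta> t) = exp (K (g (P t)))" using expK[of "g (P t)"] gH False by (simp add: \<zeta>_def H_def)
    also have "\<dots> = exp (P t)" using Pok[OF t] by simp
    also have "\<dots> = exp (K s1) * of_real t" using t by (simp add: P_def exp_add exp_of_real)
    finally show ?thesis using hz by (simp add: mult.commute)
  qed (simp add: \<zeta>_def h0)
  have dZ: "(Z has_vector_derivative (of_real (1/t) * (exp (g (P t)) * deriv g (P t)))) (at t)"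
    if t: "0 < t" "t \<le> 1" for t
  proof -
    have p: "P t \<in> K ` H" using Pok[OF t] by simp
    have d1: "(P has_vector_derivative of_real (1/t)) (at t)"
      unfolding P_def using t by (auto intro!: derivative_eq_intros)
    have d2: "((\<lambda>p. exp (g p)) has_field_derivative exp (g (P t)) * deriv g (P t)) (at (P t))"
      using dg[OF p] by (auto intro!: derivative_eq_intros)
    show ?thesis using field_vector_diff_chain_at[OF d1 d2] by (simp add: Z_def o_def)
  qed
  have \<zeta>Z: "\<zeta> y = Z y" if "y \<in> {0<..}" for y using that by (simp add: \<zeta>_def Z_def)
  have d\<zeta>: "(\<zeta> has_vector_derivative (of_real (1/t) * (exp (g (P t)) * deriv g (P t)))) (at t)"
    if t: "0 < t" "t \<le> 1" for t
    by (rule has_vector_derivative_transform_within_open[OF dZ[OF t] open_greaterThan])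
       (use t \<zeta>Z in auto)
  have cont: "continuous_on {0..1} \<zeta>"
  proof -
    have "continuous (at t within {0..1}) \<zeta>" if t: "t \<in> {0..1}" for t
    proof (cases "t = 0")
      case False
      then have "0 < t" "t \<le> 1" using t by auto
      then show ?thesis
        using has_vector_derivative_continuous[OF d\<zeta>] continuous_at_imp_continuous_at_within by blast
    next
      case True
      have Mb: "norm (\<zeta> t) \<le> exp (Re (K s1) + M) * t" if t: "0 < t" "t \<le> 1" for t
      proof -
        have a: "Re (g (P t)) \<le> c" and b: "K (g (P t)) = P t" using Pok[OF t] by auto
        have "norm (K (g (P t)) - g (P t)) \<le> M" using M[OF a] .
        then have "\<bar>Re (K (g (P t))) - Re (g (P t))\<bar> \<le> M"
          using abs_Re_le_cmod[of "K (g (P t)) - g (P t)"] by simp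
        moreover have "Re (K (g (P t))) = Re (K s1) + ln t" using b by (simp add: P_def)
        ultimately have "Re (g (P t)) \<le> Re (K s1) + ln t + M" by linarith
        then have "exp (Re (g (P t))) \<le> exp (Re (K s1) + M + ln t)" by (simp add: algebra_simps)
        also have "\<dots> = exp (Re (K s1) + M) * t" using t by (simp add: exp_add)
        finally show ?thesis using t by (simp add: \<zeta>_def norm_exp_eq_Re)
      qed
      have "(\<zeta> \<longlongrightarrow> 0) (at 0 within {0..1})"
      proof (rule tendsto_sandwich[of "\<lambda>_. 0" "\<lambda>t. norm (\<zeta> t)" _ "\<lambda>t. exp (Re (K s1) + M) * t", THEN tendsto_norm_zero_cancel])
        show "\<forall>\<^sub>F t in at 0 within {0..1}. 0 \<le> norm (\<zeta> t)" by simp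
        show "\<forall>\<^sub>F t in at 0 within {0..1}. norm (\<zeta> t) \<le> exp (Re (K s1) + M) * t"
          unfolding eventually_at_filter using Mb by (auto simp: eventually_at_filter)
        show "((\<lambda>_. 0) \<longlongrightarrow> 0) (at 0 within {0..1})" by simp
        have "((\<lambda>t. exp (Re (K s1) + M) * t) \<longlongrightarrow> exp (Re (K s1) + M) * 0) (at 0 within {0..1})"
          by (intro tendsto_intros)
        then show "((\<lambda>t. exp (Re (K s1) + M) * t) \<longlongrightarrow> 0) (at 0 within {0..1})" by simp
      qed
      then show ?thesis using True \<zeta>0 by (simp add: continuous_within)
    qed
    then show ?thesis by (simp add: continuous_on_eq_continuous_within)
  qed
  show ?thesis
    by (rule that[of \<zeta> "\<lambda>t. of_real (1/t) * (exp (g (P t)) * deriv g (P t))"])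
       (use \<zeta>0 \<zeta>1 nrm hval cont d\<zeta> in auto)
qed




theorem mainTheorem2:
  fixes \<alpha> :: real and h g :: "complex \<Rightarrow> complex" and lam z :: complex
  assumes "0 \<le> \<alpha>" and "\<alpha> < 1"
    and "class_F \<alpha> h g"
    and "norm lam = 1"
    and "z \<in> ball 0 1"
  shows "integral {0..norm z} (\<lambda>\<rho>. (1 - \<rho>) / (1 + \<rho>) powr (2 * (1 - \<alpha>))) = L_bound (norm z) \<alpha>
         \<and> norm (h z + lam * g z) \<ge> integral {0..norm z} (\<lambda>\<rho>. (1 - \<rho>) / (1 + \<rho>) powr (2 * (1 - \<alpha>)))"
proof
  note a0 = assms(1) and a1 = assms(2) and F = assms(3) and lam = assms(4) and z = assms(5)
  show "integral {0..norm z} (\<lambda>\<rho>. (1 - \<rho>) / (1 + \<rho>) powr (2 * (1 - \<alpha>))) = L_bound (norm z) \<alpha>"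
    by (rule L_integral[OF norm_ge_zero a0 a1])
  define k where "k = (\<lambda>\<rho>::real. (1 - \<rho>) / (1 + \<rho>) powr (2 * (1 - \<alpha>)))"
  define \<Phi> where "\<Phi> = (\<lambda>r. integral {0..r} k)"
  show "norm (h z + lam * g z) \<ge> integral {0..norm z} (\<lambda>\<rho>. (1 - \<rho>) / (1 + \<rho>) powr (2 * (1 - \<alpha>)))"
  proof (cases "z = 0")
    case True
    then show ?thesis using class_F_D(3,4)[OF F] by simp
  next
    case zn: False
    note cF = class_F_D[OF F]
    obtain K where holK: "K holomorphic_on {s. Re s < 0}"
      and expK: "\<And>s. Re s < 0 \<Longrightarrow> exp (K s) = h (exp s)"
      and ReK: "\<And>s. Re s < 0 \<Longrightarrow> Re (deriv K s) > 0"
      and bnd: "\<And>c. c < 0 \<Longrightarrow> \<exists>M. \<forall>s. Re s \<le> c \<longrightarrow> norm (K s - s) \<le> M"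
      using logcoord[OF F a0] by blast
    obtain \<zeta> \<zeta>' where \<zeta>0: "\<zeta> 0 = 0" and \<zeta>1: "\<zeta> 1 = z"
      and nrm: "\<And>t. t \<in> {0..1} \<Longrightarrow> norm (\<zeta> t) \<le> norm z"
      and hval: "\<And>t. t \<in> {0..1} \<Longrightarrow> h (\<zeta> t) = of_real t * h z"
      and cont\<zeta>: "continuous_on {0..1} \<zeta>"
      and d\<zeta>: "\<And>t. t \<in> {0<..<1} \<Longrightarrow> (\<zeta> has_vector_derivative \<zeta>' t) (at t)"
      using path_lift[OF holK expK ReK bnd cF(3) z zn] by blast
    define W where "W = h z"
    have Wnz: "W \<noteq> 0"
    proof -
      have "Re (Ln z) < 0" using zn z by simp
      then have "exp (K (Ln z)) = h z" using expK[of "Ln z"] zn by simp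
      then show ?thesis unfolding W_def by (metis exp_not_eq_zero)
    qed
    obtain \<theta> where \<theta>: "\<And>x. x \<in> ball 0 1 \<Longrightarrow> deriv g x = cis \<theta> * x * deriv h x" using cF(8) by blast
    define \<mu> where "\<mu> = lam * cis \<theta>"
    have n\<mu>: "norm \<mu> = 1" using lam by (simp add: \<mu>_def norm_mult)
    define FF where "FF = (\<lambda>x. h x + lam * g x)"
    have dFF: "(FF has_field_derivative deriv h x * (1 + \<mu> * x)) (at x)" if x: "x \<in> ball 0 1" for x
    proof -
      have dh: "(h has_field_derivative deriv h x) (at x)" by (rule holomorphic_derivI[OF cF(1) _ x]) simp
      have dg: "(g has_field_derivative deriv g x) (at x)" by (rule holomorphic_derivI[OF cF(2) _ x]) simp
      have "(FF has_field_derivative deriv h x + lam * deriv g x) (at x)"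
        unfolding FF_def by (intro DERIV_add dh DERIV_cmult dg)
      moreover have "deriv h x + lam * deriv g x = deriv h x * (1 + \<mu> * x)"
        using \<theta>[OF x] by (simp add: \<mu>_def algebra_simps)
      ultimately show ?thesis by simp
    qed
    have \<zeta>D: "\<zeta> t \<in> ball 0 1" if "t \<in> {0..1}" for t
      using nrm[OF that] z by simp
    have \<zeta>nz: "\<zeta> t \<noteq> 0" if "t \<in> {0<..1}" for t
    proof
      assume "\<zeta> t = 0"
      then have "h (\<zeta> t) = 0" using cF(3) by simp
      moreover have "h (\<zeta> t) = of_real t * W" using hval[of t] that by (simp add: W_def)
      ultimately show False using that Wnz by simp
    qed
    have contk: "continuous_on {0..1} k" unfolding k_def by (intro continuous_intros) auto
    have d\<Phi>: "(\<Phi> has_real_derivative k \<rho>) (at \<rho>)" if "\<rho> \<in> {0<..<1}" for \<rho>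
    proof -
      have "(\<Phi> has_real_derivative k \<rho>) (at \<rho> within {0..1})"
        unfolding \<Phi>_def by (rule integral_has_real_derivative[OF contk]) (use that in auto)
      moreover have "at \<rho> within {0..1} = at \<rho>" by (rule at_within_interior) (use that in auto)
      ultimately show ?thesis by simp
    qed
    have cont\<Phi>: "continuous_on {0..1} \<Phi>"
      unfolding \<Phi>_def by (rule indefinite_integral_continuous_1) (rule integrable_continuous_real[OF contk])
    define chi where "chi = (\<lambda>t. Re (cnj W * FF (\<zeta> t)) / norm W - \<Phi> (norm (\<zeta> t)))"
    have "chi 0 \<le> chi 1"
    proof (rule DERIV_nonneg_imp_increasing_open[of 0 1 chi])
      show "continuous_on {0..1} chi"
      proof -
        have cFF: "continuous_on (ball 0 1) FF" unfolding FF_def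
          by (intro continuous_intros holomorphic_on_imp_continuous_on cF(1,2))
        have c1: "continuous_on {0..1} (\<lambda>t. FF (\<zeta> t))"
          by (rule continuous_on_compose2[OF cFF cont\<zeta>]) (use \<zeta>D in auto)
        have c2: "continuous_on {0..1} (\<lambda>t. \<Phi> (norm (\<zeta> t)))"
          apply (rule continuous_on_compose2[OF cont\<Phi>])
           apply (intro continuous_intros cont\<zeta>)
          using \<zeta>D by (auto simp: less_imp_le)
        show ?thesis unfolding chi_def using Wnz by (intro continuous_intros c1 c2) auto
      qed
    next
      fix t :: real assume t: "0 < t" "t < 1"
      have t01: "t \<in> {0..1}" and t01': "t \<in> {0<..<1}" and t01'': "t \<in> {0<..1}" using t by auto
      define Z where "Z = \<zeta> t"
      define Z' where "Z' = \<zeta>' t"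
      have ZD: "Z \<in> ball 0 1" using \<zeta>D[OF t01] by (simp add: Z_def)
      have Znz: "Z \<noteq> 0" using \<zeta>nz[OF t01''] by (simp add: Z_def)
      have dz: "(\<zeta> has_vector_derivative Z') (at t)" using d\<zeta>[OF t01'] by (simp add: Z'_def)
      have key: "Z' * deriv h Z = W"
      proof -
        have dh: "(h has_field_derivative deriv h Z) (at (\<zeta> t))"
          using holomorphic_derivI[OF cF(1) _ ZD] by (simp add: Z_def)
        have a: "((\<lambda>t. h (\<zeta> t)) has_vector_derivative Z' * deriv h Z) (at t)"
          using field_vector_diff_chain_at[OF dz dh] by (simp add: o_def)
        have b: "((\<lambda>t. of_real t * W) has_vector_derivative W) (at t)"
          using has_vector_derivative_mult_left[OF has_vector_derivative_of_real[OF DERIV_ident], of W]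
          by (simp add: mult.commute)
        have b': "((\<lambda>t. h (\<zeta> t)) has_vector_derivative W) (at t)"
          by (rule has_vector_derivative_transform_within_open[OF b open_greaterThanLessThan t01'])
             (simp add: hval W_def)
        show ?thesis using vector_derivative_unique_at[OF a b'] .
      qed
      have dF: "((\<lambda>t. FF (\<zeta> t)) has_vector_derivative Z' * (deriv h Z * (1 + \<mu> * Z))) (at t)"
        using field_vector_diff_chain_at[OF dz, of FF] dFF[OF ZD] by (simp add: o_def Z_def)
      have d1: "((\<lambda>t. Re (cnj W * FF (\<zeta> t)) / norm W) has_real_derivative
                  Re (cnj W * (Z' * (deriv h Z * (1 + \<mu> * Z)))) / norm W) (at t)"
        by (intro DERIV_cdivide has_field_derivative_Re has_vector_derivative_mult_right dF)
      have dn: "((\<lambda>t. norm (\<zeta> t)) has_real_derivative Re (cnj Z * Z') / norm Z) (at t)"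
        using norm_has_real_derivative[OF dz] Znz by (simp add: Z_def)
      have nZ: "norm Z \<in> {0<..<1}" using ZD Znz by simp
      have d2: "((\<lambda>t. \<Phi> (norm (\<zeta> t))) has_real_derivative k (norm Z) * (Re (cnj Z * Z') / norm Z)) (at t)"
      proof -
        have dP: "(\<Phi> has_real_derivative k (norm Z)) (at ((\<lambda>t. norm (\<zeta> t)) t))"
          using d\<Phi>[OF nZ] by (simp add: Z_def)
        show ?thesis using DERIV_chain2[OF dP dn] .
      qed
      have dchi: "(chi has_real_derivative
          Re (cnj W * (Z' * (deriv h Z * (1 + \<mu> * Z)))) / norm W - k (norm Z) * (Re (cnj Z * Z') / norm Z)) (at t)"
        unfolding chi_def by (rule DERIV_diff[OF d1 d2])
      define \<rho> where "\<rho> = norm Z"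
      have \<rho>: "0 < \<rho>" "\<rho> < 1" using nZ by (auto simp: \<rho>_def)
      have t1: "Re (cnj W * (Z' * (deriv h Z * (1 + \<mu> * Z)))) / norm W \<ge> norm W * (1 - \<rho>)"
      proof -
        have "cnj W * (Z' * (deriv h Z * (1 + \<mu> * Z))) = cnj W * W * (1 + \<mu> * Z)"
          using key by (simp add: algebra_simps)
        also have "\<dots> = of_real ((norm W)^2) * (1 + \<mu> * Z)"
          using complex_norm_square[of W] by (simp add: mult.commute)
        finally have X: "cnj W * (Z' * (deriv h Z * (1 + \<mu> * Z))) = of_real ((norm W)^2) * (1 + \<mu> * Z)" .
        have R: "Re (of_real a * Y) = a * Re Y" for a Y by simp
        have e: "Re (cnj W * (Z' * (deriv h Z * (1 + \<mu> * Z)))) / norm W = norm W * Re (1 + \<mu> * Z)"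
          unfolding X R using Wnz by (simp add: power2_eq_square)
        have "Re (\<mu> * Z) \<ge> - \<rho>"
          using abs_Re_le_cmod[of "\<mu> * Z"] n\<mu> by (simp add: norm_mult \<rho>_def)
        then have "Re (1 + \<mu> * Z) \<ge> 1 - \<rho>" by simp
        then show ?thesis unfolding e using Wnz by (simp add: mult_left_mono)
      qed
      have k0: "k \<rho> \<ge> 0" using \<rho> unfolding k_def by simp
      have t2: "k \<rho> * (Re (cnj Z * Z') / norm Z) \<le> k \<rho> * norm Z'"
      proof -
        have "Re (cnj Z * Z') \<le> norm (cnj Z * Z')" by (rule complex_Re_le_cmod)
        then have "Re (cnj Z * Z') / norm Z \<le> norm Z'" using Znz by (simp add: norm_mult divide_le_eq mult.commute)
        then show ?thesis using k0 by (rule mult_left_mono)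
      qed
      have t3: "k \<rho> * norm Z' \<le> (1 - \<rho>) * norm W"
      proof -
        have dist: "(1 + \<rho>) powr (- (2 * (1 - \<alpha>))) \<le> norm (deriv h Z)"
          using distortion[OF F a1 ZD] by (simp add: \<rho>_def)
        have "k \<rho> = (1 - \<rho>) * (1 + \<rho>) powr (- (2 * (1 - \<alpha>)))"
          unfolding k_def powr_minus by (simp only: divide_inverse)
        also have "\<dots> \<le> (1 - \<rho>) * norm (deriv h Z)" using \<rho> dist by (intro mult_left_mono) auto
        finally have "k \<rho> * norm Z' \<le> (1 - \<rho>) * norm (deriv h Z) * norm Z'"
          by (intro mult_right_mono) auto
        also have "\<dots> = (1 - \<rho>) * (norm Z' * norm (deriv h Z))" by (simp add: mult.commute mult.left_commute)
        also have "norm Z' * norm (deriv h Z) = norm W" using key by (metis norm_mult)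
        finally show "k \<rho> * norm Z' \<le> (1 - \<rho>) * norm W" .
      qed
      have "0 \<le> Re (cnj W * (Z' * (deriv h Z * (1 + \<mu> * Z)))) / norm W - k (norm Z) * (Re (cnj Z * Z') / norm Z)"
        using t1 t2 t3 unfolding \<rho>_def by (simp add: algebra_simps)
      then show "\<exists>y. (chi has_real_derivative y) (at t) \<and> 0 \<le> y" using dchi by blast
    qed simp
    moreover have "chi 0 = 0" unfolding chi_def \<Phi>_def using \<zeta>0 cF(3,4) by (simp add: FF_def)
    moreover have "chi 1 \<le> norm (h z + lam * g z) - \<Phi> (norm z)"
    proof -
      have "Re (cnj W * FF z) \<le> norm (cnj W * FF z)" by (rule complex_Re_le_cmod)
      then have "Re (cnj W * FF z) / norm W \<le> norm (FF z)" using Wnz by (simp add: norm_mult divide_le_eq mult.commute)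
      then show ?thesis unfolding chi_def using \<zeta>1 by (simp add: FF_def)
    qed
    ultimately show ?thesis by (simp add: \<Phi>_def k_def)
  qed
qed


end
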